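(* Let $B$ and $H$ be differentiation bases in $\mathbb{R}^2$ with $B\subset H$. Then the union of at most countably many $R_{B,H}$-sets is a $W_{B,H}$-set, and the union of at most countably many $R^{+}_{B,H}$-sets is a $W^{+}_{B,H}$-set.
   Context: A differentiation basis in $\mathbb{R}^n$ is a mapping $B$ assigning to each $x\in\mathbb{R}^n$ a family $B(x)$ of bounded measurable sets of positive Lebesgue measure containing $x$, such that there is a sequence $R_k\in B(x)$ with $\operatorname{diam}R_k\to 0$. $B\subset H$ means $B(x)\subset H(x)$ for all $x$. For $f\in L(\mathbb{R}^n)$ the upper and lower derivatives of $\int f$ at $x$ with respect to $B$ are $\overline{D}_B(\int f,x)=\limsup_{R\in B(x),\,\operatorname{diam}R\to0}\frac{1}{|R|}\int_R f$ and $\underline{D}_B(\int f,x)=\liminf_{R\in B(x),\,\operatorname{diam}R\to0}\frac{1}{|R|}\int_R f$; $B$ differentiates $\int f$ if both equal $f(x)$ for almost every $x$. $F_B$ denotes the class of $f\in L(\mathbb{R}^n)$ whose integrals are differentiated by $B$. $\Gamma_2$ is the set of rotations of $\mathbb{R}^2$ about the origin. For $\gamma\in\Gamma_2$ the $\gamma$-rotated basis is $B(\gamma)(x)=\{x+\gamma(R-x): R\in B(x)\}$. For $E\subset\Gamma_2$: $E$ is a $W_{B,H}$-set (resp. $W^{+}_{B,H}$-set) if there exists $f\in L(\mathbb{R}^2)$ (resp. $f\in L(\mathbb{R}^2)$ with $f\ge 0$) such that (1) $f\notin F_{B(\gamma)}$ for every $\gamma\in E$ and (2) $f\in F_{H(\gamma)}$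 for every $\gamma\notin E$. $E$ is an $R_{B,H}$-set (resp. $R^{+}_{B,H}$-set) if there exists $f\in L(\mathbb{R}^2)$ (resp. $f\in L(\mathbb{R}^2)$ with $f\ge0$) such that (1) for every $\gamma\in E$, $\overline{D}_{B(\gamma)}(\int f,x)=\infty$ for almost every $x\in\mathbb{R}^2$, and (2) $f\in F_{H(\gamma)}$ for every $\gamma\notin E$. *)

theory Defs
  imports "HOL-Analysis.Analysis"
begin

type_synonym pt = "real^2"

definition diff_basis :: "(pt \<Rightarrow> pt set set) \<Rightarrow> bool" where
  "diff_basis B \<longleftrightarrow> (\<forall>x. (\<forall>R\<in>B x. bounded R \<and> R \<in> sets lebesgue \<and>
        0 < emeasure lebesgue R \<and> x \<in> R) \<and>
     (\<exists>Rs::nat \<Rightarrow> pt set. (\<forall>k. Rs k \<in> B x) \<and> (\<lambda>k. diameter (Rs k)) \<longlonglongrightarrow> 0))"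

definition basis_subset :: "(pt \<Rightarrow> pt set set) \<Rightarrow> (pt \<Rightarrow> pt set set) \<Rightarrow> bool" where
  "basis_subset B H \<longleftrightarrow> (\<forall>x. B x \<subseteq> H x)"

definition avg :: "(pt \<Rightarrow> real) \<Rightarrow> pt set \<Rightarrow> real" where
  "avg f R = (LINT y:R|lebesgue. f y) / measure lebesgue R"

text \<open>Upper / lower derivative of the integral of f at x w.r.t. B
  (limsup / liminf as diam R \<rightarrow> 0, R \<in> B x).\<close>
definition upper_deriv :: "(pt \<Rightarrow> pt set set) \<Rightarrow> (pt \<Rightarrow> real) \<Rightarrow> pt \<Rightarrow> ereal" where
  "upper_deriv B f x = (INF \<delta>\<in>{0<..}. SUP R\<in>{R\<in>B x. diameter R < \<delta>}. ereal (avg f R))"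

definition lower_deriv :: "(pt \<Rightarrow> pt set set) \<Rightarrow> (pt \<Rightarrow> real) \<Rightarrow> pt \<Rightarrow> ereal" where
  "lower_deriv B f x = (SUP \<delta>\<in>{0<..}. INF R\<in>{R\<in>B x. diameter R < \<delta>}. ereal (avg f R))"

definition F_class :: "(pt \<Rightarrow> pt set set) \<Rightarrow> (pt \<Rightarrow> real) set" where
  "F_class B = {f. integrable lebesgue f \<and>
     (AE x in lebesgue. upper_deriv B f x = ereal (f x) \<and> lower_deriv B f x = ereal (f x))}"

definition Gamma2 :: "(pt \<Rightarrow> pt) set" where
  "Gamma2 = {g. orthogonal_transformation g \<and> det (matrix g) = 1}"

definition rotated_basis :: "(pt \<Rightarrow> pt set set) \<Rightarrow> (pt \<Rightarrow> pt) \<Rightarrow> pt \<Rightarrow> pt set set" where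
  "rotated_basis B g x = (\<lambda>R. (\<lambda>y. x + g (y - x)) ` R) ` B x"

definition W_set :: "(pt \<Rightarrow> pt set set) \<Rightarrow> (pt \<Rightarrow> pt set set) \<Rightarrow> (pt \<Rightarrow> pt) set \<Rightarrow> bool" where
  "W_set B H E \<longleftrightarrow> E \<subseteq> Gamma2 \<and> (\<exists>f. integrable lebesgue f \<and>
     (\<forall>g\<in>E. f \<notin> F_class (rotated_basis B g)) \<and>
     (\<forall>g\<in>Gamma2 - E. f \<in> F_class (rotated_basis H g)))"

definition W_plus_set :: "(pt \<Rightarrow> pt set set) \<Rightarrow> (pt \<Rightarrow> pt set set) \<Rightarrow> (pt \<Rightarrow> pt) set \<Rightarrow> bool" where
  "W_plus_set B H E \<longleftrightarrow> E \<subseteq> Gamma2 \<and> (\<exists>f. integrable lebesgue f \<and> (\<forall>x. f x \<ge> 0) \<and>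
     (\<forall>g\<in>E. f \<notin> F_class (rotated_basis B g)) \<and>
     (\<forall>g\<in>Gamma2 - E. f \<in> F_class (rotated_basis H g)))"

definition R_set :: "(pt \<Rightarrow> pt set set) \<Rightarrow> (pt \<Rightarrow> pt set set) \<Rightarrow> (pt \<Rightarrow> pt) set \<Rightarrow> bool" where
  "R_set B H E \<longleftrightarrow> E \<subseteq> Gamma2 \<and> (\<exists>f. integrable lebesgue f \<and>
     (\<forall>g\<in>E. AE x in lebesgue. upper_deriv (rotated_basis B g) f x = \<infinity>) \<and>
     (\<forall>g\<in>Gamma2 - E. f \<in> F_class (rotated_basis H g)))"

definition R_plus_set :: "(pt \<Rightarrow> pt set set) \<Rightarrow> (pt \<Rightarrow> pt set set) \<Rightarrow> (pt \<Rightarrow> pt) set \<Rightarrow> bool" where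
  "R_plus_set B H E \<longleftrightarrow> E \<subseteq> Gamma2 \<and> (\<exists>f. integrable lebesgue f \<and> (\<forall>x. f x \<ge> 0) \<and>
     (\<forall>g\<in>E. AE x in lebesgue. upper_deriv (rotated_basis B g) f x = \<infinity>) \<and>
     (\<forall>g\<in>Gamma2 - E. f \<in> F_class (rotated_basis H g)))"

end

theory Submission
  imports Defs
begin

lemma ereal_cmult_SUP:
  assumes "c > 0"
  shows "ereal c * (SUP i\<in>I. f i) = (SUP i\<in>I. ereal c * f i)"
proof (cases "I = {}")
  case True then show ?thesis using assms by (simp add: bot_ereal_def)
next
  case False then show ?thesis using assms Sup_ereal_mult_left'[of I c f] by simp
qed

lemma ereal_cmult_INF:
  assumes "c > 0"
  shows "ereal c * (INF i\<in>I. f i) = (INF i\<in>I. ereal c * f i)"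
proof -
  have "bij ((*) (ereal c))"
    apply (rule bij_betw_byWitness[of _ "\<lambda>x. (x::ereal) / c"], auto simp: assms ereal_mult_divide)
    using assms ereal_divide_eq by auto
  moreover have "mono ((*) (ereal c))"
    by (simp add: assms ereal_mult_left_mono less_imp_le mono_def)
  ultimately show ?thesis
    using mono_bij_Inf[of "(*) (ereal c)" "f ` I"] by (simp add: image_comp)
qed

lemma avg_cmult: "avg (\<lambda>y. c * F y) R = c * avg F R"
  unfolding avg_def set_lebesgue_integral_def
  by (simp add: mult.left_commute)

lemma upper_cmult:
  assumes "c > 0"
  shows "upper_deriv B' (\<lambda>y. c * F y) x = ereal c * upper_deriv B' F x"
  unfolding upper_deriv_def avg_cmult
  by (simp add: ereal_cmult_INF[OF assms] ereal_cmult_SUP[OF assms])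

lemma lower_cmult:
  assumes "c > 0"
  shows "lower_deriv B' (\<lambda>y. c * F y) x = ereal c * lower_deriv B' F x"
  unfolding lower_deriv_def avg_cmult
  by (simp add: ereal_cmult_INF[OF assms] ereal_cmult_SUP[OF assms])

lemma avg_local:
  assumes "\<And>y. y \<in> R \<Longrightarrow> f y = h y"
  shows "avg f R = avg h R"
proof -
  have "(\<lambda>y. indicator R y *\<^sub>R f y) = (\<lambda>y. indicator R y *\<^sub>R h y)"
    using assms by (auto simp: indicator_def)
  then show ?thesis unfolding avg_def set_lebesgue_integral_def by simp
qed

lemma INF_local:
  fixes F G :: "real \<Rightarrow> ereal"
  assumes "r > 0" and mF: "\<And>d d'. 0 < d \<Longrightarrow> d \<le> d' \<Longrightarrow> F d \<le> F d'"
    and mG: "\<And>d d'. 0 < d \<Longrightarrow> d \<le> d' \<Longrightarrow> G d \<le> G d'"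
    and eq: "\<And>d. 0 < d \<Longrightarrow> d \<le> r \<Longrightarrow> F d = G d"
  shows "(INF d\<in>{0<..}. F d) = (INF d\<in>{0<..}. G d)"
proof (rule antisym)
  show "(INF d\<in>{0<..}. F d) \<le> (INF d\<in>{0<..}. G d)"
  proof (rule INF_greatest)
    fix d :: real assume d: "d \<in> {0<..}"
    have "(INF d\<in>{0<..}. F d) \<le> F (min d r)" using d assms(1) by (intro INF_lower) auto
    also have "\<dots> = G (min d r)" using d assms(1) by (intro eq) auto
    also have "\<dots> \<le> G d" using d assms(1) by (intro mG) auto
    finally show "(INF d\<in>{0<..}. F d) \<le> G d" .
  qed
next
  show "(INF d\<in>{0<..}. G d) \<le> (INF d\<in>{0<..}. F d)"
  proof (rule INF_greatest)
    fix d :: real assume d: "d \<in> {0<..}"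
    have "(INF d\<in>{0<..}. G d) \<le> G (min d r)" using d assms(1) by (intro INF_lower) auto
    also have "\<dots> = F (min d r)" using d assms(1) by (intro eq[symmetric]) auto
    also have "\<dots> \<le> F d" using d assms(1) by (intro mF) auto
    finally show "(INF d\<in>{0<..}. G d) \<le> F d" .
  qed
qed

lemma SUP_local:
  fixes F G :: "real \<Rightarrow> ereal"
  assumes "r > 0" and mF: "\<And>d d'. 0 < d \<Longrightarrow> d \<le> d' \<Longrightarrow> F d' \<le> F d"
    and mG: "\<And>d d'. 0 < d \<Longrightarrow> d \<le> d' \<Longrightarrow> G d' \<le> G d"
    and eq: "\<And>d. 0 < d \<Longrightarrow> d \<le> r \<Longrightarrow> F d = G d"
  shows "(SUP d\<in>{0<..}. F d) = (SUP d\<in>{0<..}. G d)"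
proof (rule antisym)
  show "(SUP d\<in>{0<..}. F d) \<le> (SUP d\<in>{0<..}. G d)"
  proof (rule SUP_least)
    fix d :: real assume d: "d \<in> {0<..}"
    have "F d \<le> F (min d r)" using d assms(1) by (intro mF) auto
    also have "\<dots> = G (min d r)" using d assms(1) by (intro eq) auto
    also have "\<dots> \<le> (SUP d\<in>{0<..}. G d)" using d assms(1) by (intro SUP_upper) auto
    finally show "F d \<le> (SUP d\<in>{0<..}. G d)" .
  qed
next
  show "(SUP d\<in>{0<..}. G d) \<le> (SUP d\<in>{0<..}. F d)"
  proof (rule SUP_least)
    fix d :: real assume d: "d \<in> {0<..}"
    have "G d \<le> G (min d r)" using d assms(1) by (intro mG) auto
    also have "\<dots> = F (min d r)" using d assms(1) by (intro eq[symmetric]) auto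
    also have "\<dots> \<le> (SUP d\<in>{0<..}. F d)" using d assms(1) by (intro SUP_upper) auto
    finally show "G d \<le> (SUP d\<in>{0<..}. F d)" .
  qed
qed

lemma deriv_local:
  assumes B': "\<And>R. R \<in> B' x \<Longrightarrow> x \<in> R \<and> bounded R" and r: "r > 0"
    and fh: "\<And>y. y \<in> ball x r \<Longrightarrow> f y = h y"
  shows "upper_deriv B' f x = upper_deriv B' h x \<and> lower_deriv B' f x = lower_deriv B' h x"
proof -
  have av: "avg f R = avg h R" if "R \<in> B' x" "diameter R < r" for R
  proof (rule avg_local)
    fix y assume "y \<in> R"
    then have "dist x y \<le> diameter R" using B'[OF that(1)] diameter_bounded_bound by blast
    then show "f y = h y" using that(2) by (intro fh) auto
  qed
  show ?thesis unfolding upper_deriv_def lower_deriv_def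
  proof
    show "(INF \<delta>\<in>{0<..}. SUP R\<in>{R \<in> B' x. diameter R < \<delta>}. ereal (avg f R)) =
          (INF \<delta>\<in>{0<..}. SUP R\<in>{R \<in> B' x. diameter R < \<delta>}. ereal (avg h R))"
      by (rule INF_local[OF r]) (auto intro!: SUP_subset_mono SUP_cong simp: av)
    show "(SUP \<delta>\<in>{0<..}. INF R\<in>{R \<in> B' x. diameter R < \<delta>}. ereal (avg f R)) =
          (SUP \<delta>\<in>{0<..}. INF R\<in>{R \<in> B' x. diameter R < \<delta>}. ereal (avg h R))"
      by (rule SUP_local[OF r]) (auto intro!: INF_superset_mono INF_cong simp: av)
  qed
qed


lemma rot_basic:
  assumes g: "g \<in> Gamma2" and dB: "diff_basis B" and R0: "R0 \<in> B x"
  shows "x \<in> (\<lambda>y. x + g (y - x)) ` R0 \<and> bounded ((\<lambda>y. x + g (y - x)) ` R0)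
     \<and> diameter ((\<lambda>y. x + g (y - x)) ` R0) \<le> diameter R0"
proof -
  have ot: "orthogonal_transformation g" using g by (simp add: Gamma2_def)
  then have lin: "linear g" and nm: "\<And>v. norm (g v) = norm v"
    by (auto simp: orthogonal_transformation)
  have R0p: "bounded R0" "x \<in> R0" using dB R0 unfolding diff_basis_def by auto
  have "x = x + g (x - x)" using lin by (simp add: linear_0)
  then have xin: "x \<in> (\<lambda>y. x + g (y - x)) ` R0" using R0p by blast
  have d: "norm ((x + g (a - x)) - (x + g (b - x))) \<le> diameter R0" if "a \<in> R0" "b \<in> R0" for a b
  proof -
    have "(x + g (a - x)) - (x + g (b - x)) = g (a - b)"
      using lin by (simp add: linear_diff)
    then have "norm ((x + g (a - x)) - (x + g (b - x))) = dist a b" by (simp add: nm dist_norm)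
    also have "\<dots> \<le> diameter R0" using diameter_bounded_bound R0p that by blast
    finally show ?thesis .
  qed
  have "bounded ((\<lambda>y. x + g (y - x)) ` R0)"
    unfolding bounded_iff
  proof (intro exI ballI)
    fix z assume "z \<in> (\<lambda>y. x + g (y - x)) ` R0"
    then obtain a where a: "a \<in> R0" "z = x + g (a - x)" by auto
    have "norm z \<le> norm x + norm (g (a - x))" using a(2) norm_triangle_ineq by blast
    also have "\<dots> = norm x + norm (z - x)" using a(2) by simp
    also have "z - x = (x + g (a - x)) - (x + g (x - x))" using a(2) lin by (simp add: linear_0)
    finally show "norm z \<le> norm x + diameter R0" using d[OF a(1) R0p(2)] by simp
  qed
  moreover have "diameter ((\<lambda>y. x + g (y - x)) ` R0) \<le> diameter R0"
    by (rule diameter_le) (use R0p d in auto)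
  ultimately show ?thesis using xin by blast
qed

lemma rot_props:
  assumes g: "g \<in> Gamma2" and dB: "diff_basis B" and R: "R \<in> rotated_basis B g x"
  shows "x \<in> R \<and> bounded R"
  using R rot_basic[OF g dB] unfolding rotated_basis_def by auto

lemma rot_small:
  assumes g: "g \<in> Gamma2" and dB: "diff_basis B" and d: "\<delta> > 0"
  shows "\<exists>R\<in>rotated_basis B g x. diameter R < \<delta>"
proof -
  obtain Rs where Rs: "\<And>k. Rs k \<in> B x" "(\<lambda>k. diameter (Rs k)) \<longlonglongrightarrow> 0"
    using dB unfolding diff_basis_def by blast
  then obtain k where "dist (diameter (Rs k)) 0 < \<delta>" using d by (meson LIMSEQ_iff_nz dist_norm le_refl)
  then have k: "diameter (Rs k) < \<delta>" by simp
  have "(\<lambda>y. x + g (y - x)) ` Rs k \<in> rotated_basis B g x" using Rs(1) unfolding rotated_basis_def by blast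
  moreover have "diameter ((\<lambda>y. x + g (y - x)) ` Rs k) < \<delta>"
    using rot_basic[OF g dB Rs(1)[of k]] k by linarith
  ultimately show ?thesis by blast
qed

lemma zero_deriv:
  assumes g: "g \<in> Gamma2" and dB: "diff_basis B"
  shows "upper_deriv (rotated_basis B g) (\<lambda>y. 0) x = 0 \<and> lower_deriv (rotated_basis B g) (\<lambda>y. 0) x = 0"
proof -
  have ne: "{R \<in> rotated_basis B g x. diameter R < d} \<noteq> {}" if "d > 0" for d
    using rot_small[OF g dB that, of x] by blast
  have a0: "avg (\<lambda>y. 0) R = 0" for R by (simp add: avg_def)
  have "(INF d\<in>{0::real<..}. SUP R\<in>{R \<in> rotated_basis B g x. diameter R < d}. ereal (avg (\<lambda>y. 0) R)) = 0"
    using ne by (simp add: a0)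
  moreover have "(SUP d\<in>{0::real<..}. INF R\<in>{R \<in> rotated_basis B g x. diameter R < d}. ereal (avg (\<lambda>y. 0) R)) = 0"
    using ne by (simp add: a0)
  ultimately show ?thesis unfolding upper_deriv_def lower_deriv_def by simp
qed

lemma zero_F: assumes g: "g \<in> Gamma2" and dB: "diff_basis B"
  shows "(\<lambda>y. 0) \<in> F_class (rotated_basis B g)"
  unfolding F_class_def using zero_deriv[OF g dB] by simp


definition Qs :: "nat \<Rightarrow> pt set" where
  "Qs n = {y. real n < y$1 \<and> y$1 < real n + 1}"

lemma Qs_idx: "y \<in> Qs n \<Longrightarrow> n = nat \<lfloor>y$1\<rfloor>"
proof -
  assume "y \<in> Qs n"
  then have "real n < y$1" "y$1 < real n + 1" by (auto simp: Qs_def)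
  then have "\<lfloor>y$1\<rfloor> = int n" by (intro floor_unique) auto
  then show ?thesis by simp
qed

lemma Qs_open: "open (Qs n)"
proof -
  have "Qs n = {y::pt. y$1 > real n} \<inter> {y. y$1 < real n + 1}" by (auto simp: Qs_def)
  then show ?thesis by (simp add: open_Int open_halfspace_component_lt_cart open_halfspace_component_gt_cart)
qed

lemma Qs_sets: "Qs n \<in> sets lebesgue"
  using Qs_open by (simp add: borel_open)

lemma Qs_ne: "Qs n \<noteq> {}"
proof -
  have "(\<chi> i. real n + 1/2) \<in> Qs n" by (simp add: Qs_def)
  then show ?thesis by blast
qed

lemma Qs_notnull: "Qs n \<notin> null_sets lebesgue"
  using open_not_negligible[OF Qs_open Qs_ne] negligible_iff_null_sets by blast

lemma lines_null: "(\<Union>n. {y::pt. y$1 = real n}) \<in> null_sets lebesgue"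
proof -
  have "{y::pt. y$1 = real n} \<in> null_sets lebesgue" for n
  proof -
    have "{y::pt. y$1 = real n} = {y. axis 1 1 \<bullet> y = real n}"
      by (simp add: cart_eq_inner_axis inner_commute)
    moreover have "negligible {y::pt. axis 1 1 \<bullet> y = real n}"
      by (rule negligible_hyperplane) (simp add: axis_eq_0_iff)
    ultimately show ?thesis by (simp add: negligible_iff_null_sets)
  qed
  then show ?thesis by blast
qed

lemma point_cases:
  assumes "x \<notin> (\<Union>n. {y::pt. y$1 = real n})"
  shows "x$1 < 0 \<or> x \<in> Qs (nat \<lfloor>x$1\<rfloor>)"
proof (cases "x$1 < 0")
  case False
  then have "x$1 > 0" using assms by (metis (mono_tags) UNIV_I UN_iff linorder_neqE_linordered_idom mem_Collect_eq of_nat_0)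
  have f: "real (nat \<lfloor>x$1\<rfloor>) = of_int \<lfloor>x$1\<rfloor>" using \<open>x$1 > 0\<close> by simp
  have "of_int \<lfloor>x$1\<rfloor> \<noteq> x$1" using assms f by (metis (mono_tags) UNIV_I UN_iff mem_Collect_eq)
  then have "real (nat \<lfloor>x$1\<rfloor>) < x$1" using f of_int_floor_le[of "x$1"] by linarith
  moreover have "x$1 < real (nat \<lfloor>x$1\<rfloor>) + 1" using f by linarith
  ultimately show ?thesis by (simp add: Qs_def)
qed simp


lemma core:
  fixes B H :: "pt \<Rightarrow> pt set set" and e :: "nat \<Rightarrow> (pt \<Rightarrow> pt) set" and F :: "nat \<Rightarrow> pt \<Rightarrow> real"
  assumes dB: "diff_basis B" and dH: "diff_basis H"
    and eG: "\<And>n. e n \<subseteq> Gamma2"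
    and Fi: "\<And>n. integrable lebesgue (F n)"
    and Finf: "\<And>n g. g \<in> e n \<Longrightarrow> AE x in lebesgue. upper_deriv (rotated_basis B g) (F n) x = \<infinity>"
    and Fd: "\<And>n g. g \<in> Gamma2 - e n \<Longrightarrow> F n \<in> F_class (rotated_basis H g)"
  shows "\<exists>f. integrable lebesgue f \<and> (\<forall>x. (\<forall>n. F n x \<ge> 0) \<longrightarrow> f x \<ge> 0) \<and>
     (\<forall>g\<in>(\<Union>n. e n). f \<notin> F_class (rotated_basis B g)) \<and>
     (\<forall>g\<in>Gamma2 - (\<Union>n. e n). f \<in> F_class (rotated_basis H g))"
proof -
  define I where "I n = (LINT y|lebesgue. norm (F n y))" for n
  have I0: "I n \<ge> 0" for n unfolding I_def by simp
  define c where "c n = (1/2)^n / (1 + I n)" for n :: nat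
  have cpos: "c n > 0" for n unfolding c_def using I0[of n] by simp
  define h where "h n y = c n * (indicator (Qs n) y * F n y)" for n y
  define f where "f y = (\<Sum>n. h n y)" for y
  have hz: "h n y = 0" if "n \<noteq> nat \<lfloor>y$1\<rfloor>" for n y
    using Qs_idx[of y n] that by (auto simp: h_def indicator_def)
  have hsum: "summable (\<lambda>n. h n y)" for y
    by (rule summable_finite[of "{nat \<lfloor>y$1\<rfloor>}"]) (auto intro: hz)
  have fv: "f y = h (nat \<lfloor>y$1\<rfloor>) y" for y
    unfolding f_def by (subst suminf_finite[of "{nat \<lfloor>y$1\<rfloor>}"]) (auto intro: hz)
  have fQ: "f y = c k * F k y" if "y \<in> Qs k" for y k
    using fv[of y] Qs_idx[OF that] that by (simp add: h_def)
  have fO: "f y = 0" if "y$1 < 0" for y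
    using fv[of y] that by (simp add: h_def Qs_def indicator_def)
  have hint: "integrable lebesgue (h n)" for n
    unfolding h_def using integrable_mult_indicator[OF Qs_sets Fi, of n]
    by (intro integrable_mult_right) simp
  have hbound: "norm (LINT y|lebesgue. norm (h n y)) \<le> (1/2)^n" for n
  proof -
    have "(LINT y|lebesgue. norm (h n y)) = c n * (LINT y|lebesgue. indicator (Qs n) y * norm (F n y))"
      using cpos[of n] by (simp add: h_def abs_mult)
    also have "(LINT y|lebesgue. indicator (Qs n) y * norm (F n y)) \<le> I n"
      unfolding I_def
    proof (rule integral_mono)
      show "integrable lebesgue (\<lambda>y. indicator (Qs n) y * norm (F n y))"
        using integrable_mult_indicator[OF Qs_sets integrable_norm[OF Fi], of n] by simp
      show "integrable lebesgue (\<lambda>y. norm (F n y))" using Fi by simp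
    qed (simp add: indicator_def)
    then have "c n * (LINT y|lebesgue. indicator (Qs n) y * norm (F n y)) \<le> c n * I n"
      using cpos[of n] by (intro mult_left_mono) auto
    also have "c n * I n \<le> (1/2)^n"
    proof -
      have "c n * I n = (1/2)^n * (I n / (1 + I n))" unfolding c_def by simp
      also have "\<dots> \<le> (1/2)^n * 1" using I0[of n]
        by (intro mult_left_mono) (auto simp: divide_le_eq)
      finally show ?thesis by simp
    qed
    finally show ?thesis by simp
  qed
  have fint: "integrable lebesgue f"
    unfolding f_def
  proof (rule integrable_suminf)
    show "integrable lebesgue (h i)" for i by (rule hint)
    show "AE x in lebesgue. summable (\<lambda>i. norm (h i x))"
      by (rule AE_I2, rule summable_finite[of "{nat \<lfloor>_$1\<rfloor>}"]) (auto intro: hz)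
    show "summable (\<lambda>i. LINT x|lebesgue. norm (h i x))"
      by (rule summable_comparison_test'[of "\<lambda>n. (1/2)^n" 0]) (use hbound in auto)
  qed
  have fnn: "f x \<ge> 0" if "\<forall>n. F n x \<ge> 0" for x
    using fv[of x] that cpos[of "nat \<lfloor>x$1\<rfloor>"] by (simp add: h_def indicator_def less_imp_le)
  have part1: "f \<notin> F_class (rotated_basis B g)" if g: "g \<in> e k" for g k
  proof
    assume "f \<in> F_class (rotated_basis B g)"
    then have ae1: "AE x in lebesgue. upper_deriv (rotated_basis B g) f x = ereal (f x)"
      unfolding F_class_def by auto
    have gG: "g \<in> Gamma2" using g eG by blast
    have "AE x in lebesgue. x \<notin> Qs k"
      using ae1 Finf[OF g]
    proof eventually_elim
      case (elim x)
      show "x \<notin> Qs k"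
      proof
        assume xQ: "x \<in> Qs k"
        obtain r where r: "r > 0" "ball x r \<subseteq> Qs k" using Qs_open xQ open_contains_ball by blast
        have "upper_deriv (rotated_basis B g) f x = upper_deriv (rotated_basis B g) (\<lambda>y. c k * F k y) x"
          using deriv_local[OF rot_props[OF gG dB] r(1), where f=f and h="\<lambda>y. c k * F k y"] r fQ by blast
        also have "\<dots> = \<infinity>" using upper_cmult[OF cpos[of k]] elim(2) cpos[of k] by simp
        finally show False using elim(1) by simp
      qed
    qed
    then have "Qs k \<in> null_sets lebesgue" using AE_iff_null_sets[OF Qs_sets] by blast
    then show False using Qs_notnull by blast
  qed
  have part2: "f \<in> F_class (rotated_basis H g)" if g: "g \<in> Gamma2 - (\<Union>n. e n)" for g
  proof -
    let ?H = "rotated_basis H g"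
    have gG: "g \<in> Gamma2" using g by blast
    have aeN: "AE x in lebesgue. x \<notin> (\<Union>n. {y::pt. y$1 = real n})"
      using AE_iff_null_sets lines_null by blast
    have aeF: "AE x in lebesgue. \<forall>n. upper_deriv ?H (F n) x = ereal (F n x) \<and> lower_deriv ?H (F n) x = ereal (F n x)"
      using Fd g unfolding F_class_def by (intro AE_all_countable[THEN iffD2]) blast
    have "AE x in lebesgue. upper_deriv ?H f x = ereal (f x) \<and> lower_deriv ?H f x = ereal (f x)"
      using aeN aeF
    proof eventually_elim
      case (elim x)
      from point_cases[OF elim(1)] show ?case
      proof
        assume x0: "x$1 < 0"
        have "open {y::pt. y$1 < 0}" by (rule open_halfspace_component_lt_cart)
        then obtain r where r: "r > 0" "ball x r \<subseteq> {y::pt. y$1 < 0}" using x0 open_contains_ball by blast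
        have "upper_deriv ?H f x = upper_deriv ?H (\<lambda>y. 0) x \<and> lower_deriv ?H f x = lower_deriv ?H (\<lambda>y. 0) x"
          using deriv_local[OF rot_props[OF gG dH] r(1), where f=f and h="\<lambda>y. 0"] r fO by blast
        then show ?thesis using zero_deriv[OF gG dH] fO[OF x0] by simp
      next
        assume xQ: "x \<in> Qs (nat \<lfloor>x$1\<rfloor>)"
        define k where "k = nat \<lfloor>x$1\<rfloor>"
        have xQ': "x \<in> Qs k" using xQ k_def by simp
        obtain r where r: "r > 0" "ball x r \<subseteq> Qs k" using Qs_open xQ' open_contains_ball by blast
        have "upper_deriv ?H f x = upper_deriv ?H (\<lambda>y. c k * F k y) x \<and> lower_deriv ?H f x = lower_deriv ?H (\<lambda>y. c k * F k y) x"
          using deriv_local[OF rot_props[OF gG dH] r(1), where f=f and h="\<lambda>y. c k * F k y"] r fQ by blast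
        then show ?thesis using upper_cmult[OF cpos[of k]] lower_cmult[OF cpos[of k]] elim(2) fQ[OF xQ'] by simp
      qed
    qed
    then show ?thesis using fint unfolding F_class_def by simp
  qed
  show ?thesis using fint fnn part1 part2 by blast
qed


theorem theorem3:
  fixes B H :: "pt \<Rightarrow> pt set set"
  assumes "diff_basis B" and "diff_basis H" and "basis_subset B H"
  shows "(\<forall>\<E>. countable \<E> \<and> (\<forall>E\<in>\<E>. R_set B H E) \<longrightarrow> W_set B H (\<Union>\<E>)) \<and>
         (\<forall>\<E>. countable \<E> \<and> (\<forall>E\<in>\<E>. R_plus_set B H E) \<longrightarrow> W_plus_set B H (\<Union>\<E>))"
proof (intro conjI allI impI)
  fix \<E> assume a: "countable \<E> \<and> (\<forall>E\<in>\<E>. R_set B H E)"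
  define \<E>' where "\<E>' = insert {} \<E>"
  define e where "e = from_nat_into \<E>'"
  have re: "range e = \<E>'" unfolding e_def \<E>'_def using a by simp
  have U: "(\<Union>n. e n) = \<Union>\<E>" using re unfolding \<E>'_def by auto
  have "\<forall>n. \<exists>F. e n \<subseteq> Gamma2 \<and> integrable lebesgue F \<and>
     (\<forall>g\<in>e n. AE x in lebesgue. upper_deriv (rotated_basis B g) F x = \<infinity>) \<and>
     (\<forall>g\<in>Gamma2 - e n. F \<in> F_class (rotated_basis H g))"
  proof
    fix n
    have "e n \<in> \<E>'" using re by blast
    then show "\<exists>F. e n \<subseteq> Gamma2 \<and> integrable lebesgue F \<and>
     (\<forall>g\<in>e n. AE x in lebesgue. upper_deriv (rotated_basis B g) F x = \<infinity>) \<and>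
     (\<forall>g\<in>Gamma2 - e n. F \<in> F_class (rotated_basis H g))"
    proof (cases "e n = {}")
      case True
      then show ?thesis using zero_F[OF _ assms(2)] by (intro exI[of _ "\<lambda>y. 0"]) auto
    next
      case False
      then have "e n \<in> \<E>" using \<open>e n \<in> \<E>'\<close> unfolding \<E>'_def by auto
      then have "R_set B H (e n)" using a by blast
      then show ?thesis unfolding R_set_def by (elim conjE exE) (intro exI conjI, assumption+)
    qed
  qed
  then obtain F where F: "\<And>n. e n \<subseteq> Gamma2 \<and> integrable lebesgue (F n) \<and>
     (\<forall>g\<in>e n. AE x in lebesgue. upper_deriv (rotated_basis B g) (F n) x = \<infinity>) \<and>
     (\<forall>g\<in>Gamma2 - e n. F n \<in> F_class (rotated_basis H g))" by metis
  have "\<exists>f. integrable lebesgue f \<and> (\<forall>x. (\<forall>n. F n x \<ge> 0) \<longrightarrow> f x \<ge> 0) \<and>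
     (\<forall>g\<in>(\<Union>n. e n). f \<notin> F_class (rotated_basis B g)) \<and>
     (\<forall>g\<in>Gamma2 - (\<Union>n. e n). f \<in> F_class (rotated_basis H g))"
    by (rule core[OF assms(1,2)]) (use F in \<open>simp; fail\<close>)+
  then obtain f where f: "integrable lebesgue f"
     "\<forall>g\<in>(\<Union>n. e n). f \<notin> F_class (rotated_basis B g)"
     "\<forall>g\<in>Gamma2 - (\<Union>n. e n). f \<in> F_class (rotated_basis H g)"
    by blast
  have "\<Union>\<E> \<subseteq> Gamma2" unfolding U[symmetric] using F by (simp add: UN_subset_iff)
  then show "W_set B H (\<Union>\<E>)" unfolding W_set_def using f U by auto
next
  fix \<E> assume a: "countable \<E> \<and> (\<forall>E\<in>\<E>. R_plus_set B H E)"
  define \<E>' where "\<E>' = insert {} \<E>"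
  define e where "e = from_nat_into \<E>'"
  have re: "range e = \<E>'" unfolding e_def \<E>'_def using a by simp
  have U: "(\<Union>n. e n) = \<Union>\<E>" using re unfolding \<E>'_def by auto
  have "\<forall>n. \<exists>F. e n \<subseteq> Gamma2 \<and> integrable lebesgue F \<and> (\<forall>x. F x \<ge> 0) \<and>
     (\<forall>g\<in>e n. AE x in lebesgue. upper_deriv (rotated_basis B g) F x = \<infinity>) \<and>
     (\<forall>g\<in>Gamma2 - e n. F \<in> F_class (rotated_basis H g))"
  proof
    fix n
    have "e n \<in> \<E>'" using re by blast
    then show "\<exists>F. e n \<subseteq> Gamma2 \<and> integrable lebesgue F \<and> (\<forall>x. F x \<ge> 0) \<and>
     (\<forall>g\<in>e n. AE x in lebesgue. upper_deriv (rotated_basis B g) F x = \<infinity>) \<and>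
     (\<forall>g\<in>Gamma2 - e n. F \<in> F_class (rotated_basis H g))"
    proof (cases "e n = {}")
      case True
      then show ?thesis using zero_F[OF _ assms(2)] by (intro exI[of _ "\<lambda>y. 0"]) auto
    next
      case False
      then have "e n \<in> \<E>" using \<open>e n \<in> \<E>'\<close> unfolding \<E>'_def by auto
      then have "R_plus_set B H (e n)" using a by blast
      then show ?thesis unfolding R_plus_set_def by (elim conjE exE) (intro exI conjI, assumption+)
    qed
  qed
  then obtain F where F: "\<And>n. e n \<subseteq> Gamma2 \<and> integrable lebesgue (F n) \<and> (\<forall>x. F n x \<ge> 0) \<and>
     (\<forall>g\<in>e n. AE x in lebesgue. upper_deriv (rotated_basis B g) (F n) x = \<infinity>) \<and>
     (\<forall>g\<in>Gamma2 - e n. F n \<in> F_class (rotated_basis H g))" by metis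
  have "\<exists>f. integrable lebesgue f \<and> (\<forall>x. (\<forall>n. F n x \<ge> 0) \<longrightarrow> f x \<ge> 0) \<and>
     (\<forall>g\<in>(\<Union>n. e n). f \<notin> F_class (rotated_basis B g)) \<and>
     (\<forall>g\<in>Gamma2 - (\<Union>n. e n). f \<in> F_class (rotated_basis H g))"
    by (rule core[OF assms(1,2)]) (use F in \<open>simp; fail\<close>)+
  then obtain f where f: "integrable lebesgue f" "\<forall>x. (\<forall>n. F n x \<ge> 0) \<longrightarrow> f x \<ge> 0"
     "\<forall>g\<in>(\<Union>n. e n). f \<notin> F_class (rotated_basis B g)"
     "\<forall>g\<in>Gamma2 - (\<Union>n. e n). f \<in> F_class (rotated_basis H g)"
    by blast
  have "\<Union>\<E> \<subseteq> Gamma2" unfolding U[symmetric] using F by (simp add: UN_subset_iff)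
  moreover have "\<forall>x. f x \<ge> 0" using f(2) F by simp
  ultimately show "W_plus_set B H (\<Union>\<E>)" unfolding W_plus_set_def using f U by auto
qed

end
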